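(* Let $A=\bigoplus_k A_k$ and $B=\bigoplus_k B_k$ be graded Lie algebras and let $(\alpha,\beta)$ be a derivatively knitted pair of representations for $(A,B)$. Then the graded vector space $A\oplus B$ with grading $(A\oplus B)_k:=A_k\oplus B_k$ becomes a graded Lie algebra, denoted $A\oplus_{(\alpha,\beta)}B$, with the bracket (for homogeneous elements, extended bilinearly) $$[(a_1,b_1),(a_2,b_2)] := \Bigl([a_1,a_2] + \beta(b_1)a_2 - (-1)^{|b_2||a_1|}\beta(b_2)a_1,\ [b_1,b_2] + \alpha(a_1)b_2 - (-1)^{|a_2||b_1|}\alpha(a_2)b_1\Bigr).$$ That is, this bracket is bilinear, of degree $0$, graded anticommutative and satisfies the graded Jacobi identity.
   Context: All gradings are either by $\mathbb Z$ or by $\mathbb Z_2$ (the same for all objects considered); $|x|$ denotes the degree of a homogeneous element $x$. For a graded vector space $V$, $\mathrm{End}(V)$ denotes the graded Lie algebra of linear endomorphisms of $V$ (graded by degree), with the graded commutator $[S,T]=ST-(-1)^{|S||T|}TS$. A derivatively knitted pair of representations $(\alpha,\beta)$ for graded Lie algebras $(A,B)$ consists of graded Lie algebra homomorphisms (of degree $0$) $\alpha:A\to\mathrm{End}(B)$ and $\beta:B\to\mathrm{End}(A)$ such that for all homogeneous $a,a_1,a_2\in A$ and $b,b_1,b_2\in B$: $$\alpha(a)[b_1,b_2] = [\alpha(a)b_1,b_2] + (-1)^{|a||b_1|}[b_1,\alpha(a)b_2] - \Bigl((-1)^{|a||b_1|}\alpha(\beta(b_1)a)b_2 - (-1)^{(|a|+|b_1|)|b_2|}\alpha(\beta(b_2)a)b_1\Bigr),$$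 $$\beta(b)[a_1,a_2] = [\beta(b)a_1,a_2] + (-1)^{|b||a_1|}[a_1,\beta(b)a_2] - \Bigl((-1)^{|b||a_1|}\beta(\alpha(a_1)b)a_2 - (-1)^{(|b|+|a_1|)|a_2|}\beta(\alpha(a_2)b)a_1\Bigr).$$ For ungraded Lie algebras all degrees are taken to be $0$. *)

theory Defs
  imports Complex_Main "HOL-Library.Z2" "HOL-Library.Product_Plus"
begin

text \<open>A grading group is an abelian group together with the parity homomorphism
  to \<int>/2, which is all that enters the Koszul signs (-1)^(|x||y|).\<close>

class grading = ab_group_add +
  fixes gpar :: "'a \<Rightarrow> bool"
  assumes gpar_add: "gpar (x + y) = (gpar x \<noteq> gpar y)"

instantiation int :: grading
begin
definition gpar_int :: "int \<Rightarrow> bool" where "gpar_int x = odd x"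
instance by standard (auto simp: gpar_int_def)
end

instantiation bit :: grading
begin
definition gpar_bit :: "bit \<Rightarrow> bool" where "gpar_bit x = odd x"
instance by standard (auto simp: gpar_bit_def)
end

definition ksign :: "'d::grading \<Rightarrow> 'd \<Rightarrow> 'k::field" where
  "ksign d e = (if gpar d \<and> gpar e then -1 else 1)"

definition graded_space ::
  "('k::field \<Rightarrow> 'v::ab_group_add \<Rightarrow> 'v) \<Rightarrow> ('d::grading \<Rightarrow> 'v set) \<Rightarrow> bool" where
  "graded_space sc H \<longleftrightarrow>
     vector_space sc \<and>
     (\<forall>d. module.subspace sc (H d)) \<and>
     (\<forall>x. \<exists>!f. finite {d. f d \<noteq> 0} \<and> (\<forall>d. f d \<in> H d) \<and> x = sum f {d. f d \<noteq> 0})"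

definition bilinear_map ::
  "('k::field \<Rightarrow> 'u::ab_group_add \<Rightarrow> 'u) \<Rightarrow> ('k \<Rightarrow> 'v::ab_group_add \<Rightarrow> 'v)
   \<Rightarrow> ('k \<Rightarrow> 'w::ab_group_add \<Rightarrow> 'w) \<Rightarrow> ('u \<Rightarrow> 'v \<Rightarrow> 'w) \<Rightarrow> bool" where
  "bilinear_map s1 s2 s3 f \<longleftrightarrow>
     (\<forall>x. Vector_Spaces.linear s2 s3 (f x)) \<and> (\<forall>y. Vector_Spaces.linear s1 s3 (\<lambda>x. f x y))"

definition graded_lie_algebra ::
  "('k::field \<Rightarrow> 'v::ab_group_add \<Rightarrow> 'v) \<Rightarrow> ('d::grading \<Rightarrow> 'v set) \<Rightarrow> ('v \<Rightarrow> 'v \<Rightarrow> 'v) \<Rightarrow> bool" where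
  "graded_lie_algebra sc H br \<longleftrightarrow>
     graded_space sc H \<and>
     bilinear_map sc sc sc br \<and>
     (\<forall>i j x y. x \<in> H i \<longrightarrow> y \<in> H j \<longrightarrow> br x y \<in> H (i + j)) \<and>
     (\<forall>i j x y. x \<in> H i \<longrightarrow> y \<in> H j \<longrightarrow>
        br x y = - sc (ksign i j) (br y x)) \<and>
     (\<forall>i j l x y z. x \<in> H i \<longrightarrow> y \<in> H j \<longrightarrow> z \<in> H l \<longrightarrow>
        sc (ksign i l) (br x (br y z)) + sc (ksign j i) (br y (br z x))
          + sc (ksign l j) (br z (br x y)) = 0)"

definition graded_map_deg ::
  "('d::grading \<Rightarrow> 'v set) \<Rightarrow> ('d \<Rightarrow> 'w set) \<Rightarrow> 'd \<Rightarrow> ('v \<Rightarrow> 'w) \<Rightarrow> bool" where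
  "graded_map_deg HV HW d T \<longleftrightarrow> (\<forall>j x. x \<in> HV j \<longrightarrow> T x \<in> HW (j + d))"

text \<open>A graded Lie algebra homomorphism of degree 0 from (A, HA, brA) into the graded Lie
  algebra End(V) of linear endomorphisms of V (graded by degree, graded commutator).\<close>
definition graded_rep ::
  "('k::field \<Rightarrow> 'a::ab_group_add \<Rightarrow> 'a) \<Rightarrow> ('d::grading \<Rightarrow> 'a set) \<Rightarrow> ('a \<Rightarrow> 'a \<Rightarrow> 'a)
   \<Rightarrow> ('k \<Rightarrow> 'v::ab_group_add \<Rightarrow> 'v) \<Rightarrow> ('d \<Rightarrow> 'v set) \<Rightarrow> ('a \<Rightarrow> 'v \<Rightarrow> 'v) \<Rightarrow> bool" where
  "graded_rep sA HA brA sV HV \<rho> \<longleftrightarrow>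
     (\<forall>v. Vector_Spaces.linear sA sV (\<lambda>a. \<rho> a v)) \<and>
     (\<forall>a. Vector_Spaces.linear sV sV (\<rho> a)) \<and>
     (\<forall>i a. a \<in> HA i \<longrightarrow> graded_map_deg HV HV i (\<rho> a)) \<and>
     (\<forall>i j a1 a2 v. a1 \<in> HA i \<longrightarrow> a2 \<in> HA j \<longrightarrow>
        \<rho> (brA a1 a2) v = \<rho> a1 (\<rho> a2 v) - sV (ksign i j) (\<rho> a2 (\<rho> a1 v)))"

definition knitted_pair ::
  "('k::field \<Rightarrow> 'a::ab_group_add \<Rightarrow> 'a) \<Rightarrow> ('d::grading \<Rightarrow> 'a set) \<Rightarrow> ('a \<Rightarrow> 'a \<Rightarrow> 'a)
   \<Rightarrow> ('k \<Rightarrow> 'b::ab_group_add \<Rightarrow> 'b) \<Rightarrow> ('d \<Rightarrow> 'b set) \<Rightarrow> ('b \<Rightarrow> 'b \<Rightarrow> 'b)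
   \<Rightarrow> ('a \<Rightarrow> 'b \<Rightarrow> 'b) \<Rightarrow> ('b \<Rightarrow> 'a \<Rightarrow> 'a) \<Rightarrow> bool" where
  "knitted_pair sA HA brA sB HB brB \<alpha> \<beta> \<longleftrightarrow>
     graded_rep sA HA brA sB HB \<alpha> \<and>
     graded_rep sB HB brB sA HA \<beta> \<and>
     (\<forall>i j l a b1 b2. a \<in> HA i \<longrightarrow> b1 \<in> HB j \<longrightarrow> b2 \<in> HB l \<longrightarrow>
        \<alpha> a (brB b1 b2) =
          brB (\<alpha> a b1) b2 + sB (ksign i j) (brB b1 (\<alpha> a b2))
          - (sB (ksign i j) (\<alpha> (\<beta> b1 a) b2) - sB (ksign (i + j) l) (\<alpha> (\<beta> b2 a) b1))) \<and>
     (\<forall>i j l b a1 a2. b \<in> HB i \<longrightarrow> a1 \<in> HA j \<longrightarrow> a2 \<in> HA l \<longrightarrow>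
        \<beta> b (brA a1 a2) =
          brA (\<beta> b a1) a2 + sA (ksign i j) (brA a1 (\<beta> b a2))
          - (sA (ksign i j) (\<beta> (\<alpha> a1 b) a2) - sA (ksign (i + j) l) (\<beta> (\<alpha> a2 b) a1)))"

definition prod_scale :: "('k \<Rightarrow> 'a \<Rightarrow> 'a) \<Rightarrow> ('k \<Rightarrow> 'b \<Rightarrow> 'b) \<Rightarrow> 'k \<Rightarrow> 'a \<times> 'b \<Rightarrow> 'a \<times> 'b" where
  "prod_scale sA sB c p = (sA c (fst p), sB c (snd p))"

definition prod_grading :: "('d \<Rightarrow> 'a set) \<Rightarrow> ('d \<Rightarrow> 'b set) \<Rightarrow> 'd \<Rightarrow> ('a \<times> 'b) set" where
  "prod_grading HA HB d = HA d \<times> HB d"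

end

theory Submission
  imports Defs
begin



lemma sum_supp_superset:
  fixes f :: "'d \<Rightarrow> 'v::comm_monoid_add"
  assumes "finite S" "{d. f d \<noteq> 0} \<subseteq> S"
  shows "sum f {d. f d \<noteq> 0} = sum f S"
  by (rule sum.mono_neutral_left) (use assms in auto)

locale gsp =
  fixes sc :: "'k::field \<Rightarrow> 'v::ab_group_add \<Rightarrow> 'v" and H :: "'d::grading \<Rightarrow> 'v set"
  assumes gs: "graded_space sc H"
begin

lemma vs: "vector_space sc" using gs unfolding graded_space_def by auto
lemma md: "module sc" using vs by (simp add: module_iff_vector_space)
lemma sub: "module.subspace sc (H d)" using gs unfolding graded_space_def by auto

lemma H0: "0 \<in> H d" using module.subspace_0[OF md sub] .
lemma Hadd: "x \<in> H d \<Longrightarrow> y \<in> H d \<Longrightarrow> x + y \<in> H d" using module.subspace_add[OF md sub] .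
lemma Hdiff: "x \<in> H d \<Longrightarrow> y \<in> H d \<Longrightarrow> x - y \<in> H d" using module.subspace_diff[OF md sub] .
lemma Hneg: "x \<in> H d \<Longrightarrow> - x \<in> H d" using module.subspace_neg[OF md sub] .
lemma Hscale: "x \<in> H d \<Longrightarrow> sc c x \<in> H d" using module.subspace_scale[OF md sub] .

lemma sc_add[simp]: "sc c (x + y) = sc c x + sc c y" using module.scale_right_distrib[OF md] .
lemma sc_diff[simp]: "sc c (x - y) = sc c x - sc c y" using module.scale_right_diff_distrib[OF md] .
lemma sc_neg[simp]: "sc c (- x) = - sc c x" using module.scale_minus_right[OF md] .
lemma sc_zero[simp]: "sc c 0 = 0" using module.scale_zero_right[OF md] .
lemma sc_one[simp]: "sc 1 x = x" using module.scale_one[OF md] .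
lemma sc_m1[simp]: "sc (-1) x = - x" using module.scale_minus_left[OF md, of 1] by simp
lemma sc_sum: "sc c (sum f S) = (\<Sum>d\<in>S. sc c (f d))" using module.scale_sum_right[OF md] .

definition P :: "'v \<Rightarrow> ('d \<Rightarrow> 'v) \<Rightarrow> bool" where
  "P x f \<longleftrightarrow> finite {d. f d \<noteq> 0} \<and> (\<forall>d. f d \<in> H d) \<and> x = sum f {d. f d \<noteq> 0}"

definition cf :: "'v \<Rightarrow> 'd \<Rightarrow> 'v" where "cf x = (THE f. P x f)"

lemma ex1P: "\<exists>!f. P x f" using gs unfolding graded_space_def P_def by blast

lemma cfP: "P x (cf x)" unfolding cf_def using theI'[OF ex1P] .

lemma cf_eq: "P x f \<Longrightarrow> cf x = f" using ex1P cfP by blast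

lemma cf_fin: "finite {d. cf x d \<noteq> 0}" using cfP P_def by blast
lemma cf_H: "cf x d \<in> H d" using cfP P_def by blast
lemma cf_sum: "finite S \<Longrightarrow> {d. cf x d \<noteq> 0} \<subseteq> S \<Longrightarrow> sum (cf x) S = x"
  using cfP[of x] sum_supp_superset[of S "cf x"] unfolding P_def by auto

lemma PI: "finite S \<Longrightarrow> {d. f d \<noteq> 0} \<subseteq> S \<Longrightarrow> (\<And>d. f d \<in> H d) \<Longrightarrow> x = sum f S \<Longrightarrow> P x f"
  unfolding P_def using sum_supp_superset[of S f] finite_subset by auto

lemma cf_hom: assumes "x \<in> H i" shows "cf x = (\<lambda>d. if d = i then x else 0)"
  by (rule cf_eq, rule PI[of "{i}"]) (use assms H0 in auto)

lemma cf_add: "cf (x + y) = (\<lambda>d. cf x d + cf y d)"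
proof (rule cf_eq, rule PI[of "{d. cf x d \<noteq> 0} \<union> {d. cf y d \<noteq> 0}"])
  show "x + y = (\<Sum>d\<in>{d. cf x d \<noteq> 0} \<union> {d. cf y d \<noteq> 0}. cf x d + cf y d)"
    by (simp add: sum.distrib cf_sum cf_fin)
qed (auto simp: cf_fin Hadd cf_H)

lemma cf_scale: "cf (sc c x) = (\<lambda>d. sc c (cf x d))"
proof (rule cf_eq, rule PI[of "{d. cf x d \<noteq> 0}"])
  show "sc c x = (\<Sum>d\<in>{d. cf x d \<noteq> 0}. sc c (cf x d))"
    by (simp add: sc_sum[symmetric] cf_sum cf_fin)
qed (auto simp: cf_fin Hscale cf_H)

definition od :: "'v \<Rightarrow> 'v" where
  "od x = sum (\<lambda>d. if gpar d then cf x d else 0) {d. cf x d \<noteq> 0}"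

lemma od_sup: "finite S \<Longrightarrow> {d. cf x d \<noteq> 0} \<subseteq> S \<Longrightarrow> od x = sum (\<lambda>d. if gpar d then cf x d else 0) S"
  unfolding od_def by (rule sum.mono_neutral_left) auto

lemma od_hom: "x \<in> H i \<Longrightarrow> od x = (if gpar i then x else 0)"
  by (subst od_sup[of "{i}"]) (auto simp: cf_hom)

lemma od_add[simp]: "od (x + y) = od x + od y"
proof -
  let ?S = "{d. cf x d \<noteq> 0} \<union> {d. cf y d \<noteq> 0}"
  have f: "finite ?S" by (simp add: cf_fin)
  have "od (x + y) = sum (\<lambda>d. if gpar d then cf (x+y) d else 0) ?S"
    by (rule od_sup) (use f in \<open>auto simp: cf_add\<close>)
  also have "\<dots> = sum (\<lambda>d. if gpar d then cf x d else 0) ?S + sum (\<lambda>d. if gpar d then cf y d else 0) ?S"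
    by (simp add: cf_add sum.distrib[symmetric] if_distrib cong: if_cong)
  also have "\<dots> = od x + od y"
    using f by (simp add: od_sup[symmetric])
  finally show ?thesis .
qed

lemma od_scale[simp]: "od (sc c x) = sc c (od x)"
proof -
  let ?S = "{d. cf x d \<noteq> 0}"
  have f: "finite ?S" by (simp add: cf_fin)
  have "od (sc c x) = sum (\<lambda>d. if gpar d then cf (sc c x) d else 0) ?S"
    by (rule od_sup) (use f in \<open>auto simp: cf_scale\<close>)
  also have "\<dots> = sc c (od x)"
    by (simp add: od_def cf_scale sc_sum if_distrib cong: if_cong)
  finally show ?thesis .
qed

lemma od_neg[simp]: "od (- x) = - od x"
  using od_scale[of "-1" x] by simp
lemma od_diff[simp]: "od (x - y) = od x - od y"
  using od_add[of x "- y"] by simp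
lemma od_zero[simp]: "od 0 = 0"
  using od_hom[OF H0] by simp

end



lemma prod_vs:
  assumes "vector_space sA" "vector_space sB"
  shows "vector_space (prod_scale sA sB)"
proof -
  have mA: "module sA" and mB: "module sB" using assms by (auto simp: module_iff_vector_space)
  show ?thesis unfolding vector_space_def prod_scale_def
    using module.scale_right_distrib[OF mA] module.scale_right_distrib[OF mB]
      module.scale_left_distrib[OF mA] module.scale_left_distrib[OF mB]
      module.scale_scale[OF mA] module.scale_scale[OF mB]
      module.scale_one[OF mA] module.scale_one[OF mB]
    by simp
qed

lemma prod_gs:
  fixes sA :: "'k::field \<Rightarrow> 'a::ab_group_add \<Rightarrow> 'a" and sB :: "'k \<Rightarrow> 'b::ab_group_add \<Rightarrow> 'b"
    and HA :: "'d::grading \<Rightarrow> 'a set" and HB :: "'d \<Rightarrow> 'b set"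
  assumes gA: "graded_space sA HA" and gB: "graded_space sB HB"
  shows "graded_space (prod_scale sA sB) (prod_grading HA HB)"
proof -
  interpret A: gsp sA HA by (rule gsp.intro) fact
  interpret B: gsp sB HB by (rule gsp.intro) fact
  have vs: "vector_space (prod_scale sA sB)" by (rule prod_vs[OF A.vs B.vs])
  have mP: "module (prod_scale sA sB)" using vs by (simp add: module_iff_vector_space)
  have sub: "module.subspace (prod_scale sA sB) (prod_grading HA HB d)" for d
    unfolding module.subspace_def[OF mP] prod_grading_def prod_scale_def
    by (auto simp: zero_prod_def A.H0 B.H0 A.Hadd B.Hadd A.Hscale B.Hscale)
  have ex: "\<exists>!f. finite {d. f d \<noteq> 0} \<and> (\<forall>d. f d \<in> prod_grading HA HB d) \<and> x = sum f {d. f d \<noteq> 0}"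
    for x :: "'a \<times> 'b"
  proof -
    obtain a b where x: "x = (a, b)" by (cases x)
    define f where "f d = (A.cf a d, B.cf b d)" for d
    let ?S = "{d. A.cf a d \<noteq> 0} \<union> {d. B.cf b d \<noteq> 0}"
    have supp: "{d. f d \<noteq> 0} = ?S" by (auto simp: f_def zero_prod_def)
    have fS: "finite ?S" by (simp add: A.cf_fin B.cf_fin)
    have Pf: "finite {d. f d \<noteq> 0} \<and> (\<forall>d. f d \<in> prod_grading HA HB d) \<and> x = sum f {d. f d \<noteq> 0}"
    proof (intro conjI allI)
      show "finite {d. f d \<noteq> 0}" using supp fS by simp
      show "f d \<in> prod_grading HA HB d" for d by (simp add: f_def prod_grading_def A.cf_H B.cf_H)
      have "sum f ?S = (sum (A.cf a) ?S, sum (B.cf b) ?S)"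
        unfolding f_def by (simp add: sum_prod)
      also have "\<dots> = (a, b)" using fS by (simp add: A.cf_sum B.cf_sum)
      finally show "x = sum f {d. f d \<noteq> 0}" using supp x by simp
    qed
    have uniq: "g = f" if Pg: "finite {d. g d \<noteq> 0} \<and> (\<forall>d. g d \<in> prod_grading HA HB d) \<and> x = sum g {d. g d \<noteq> 0}" for g
    proof -
      let ?T = "{d. g d \<noteq> 0}"
      have fT: "finite ?T" using Pg by blast
      have "A.P a (\<lambda>d. fst (g d))"
      proof (rule A.PI[OF fT])
        show "{d. fst (g d) \<noteq> 0} \<subseteq> ?T" by (auto simp: zero_prod_def)
        show "fst (g d) \<in> HA d" for d using Pg by (auto simp: prod_grading_def mem_Times_iff)
        show "a = sum (\<lambda>d. fst (g d)) ?T" using Pg x by (metis fst_conv fst_sum)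
      qed
      hence 1: "A.cf a = (\<lambda>d. fst (g d))" by (rule A.cf_eq)
      have "B.P b (\<lambda>d. snd (g d))"
      proof (rule B.PI[OF fT])
        show "{d. snd (g d) \<noteq> 0} \<subseteq> ?T" by (auto simp: zero_prod_def)
        show "snd (g d) \<in> HB d" for d using Pg by (auto simp: prod_grading_def mem_Times_iff)
        show "b = sum (\<lambda>d. snd (g d)) ?T" using Pg x by (metis snd_conv snd_sum)
      qed
      hence 2: "B.cf b = (\<lambda>d. snd (g d))" by (rule B.cf_eq)
      show ?thesis using 1 2 by (auto simp: f_def fun_eq_iff dest: fun_cong)
    qed
    show ?thesis using Pf uniq by blast
  qed
  show ?thesis unfolding graded_space_def using vs sub ex by blast
qed




lemma lin_facts:
  assumes "Vector_Spaces.linear s1 s2 f"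
  shows "f (x + y) = f x + f y" "f (x - y) = f x - f y" "f (- x) = - f x" "f 0 = 0"
    "f (s1 c x) = s2 c (f x)"
proof -
  interpret module_hom s1 s2 f using assms by (simp add: module_hom_iff_linear)
  show "f (x + y) = f x + f y" by (rule add)
  show "f (x - y) = f x - f y" by (rule diff)
  show "f (- x) = - f x" by (rule neg)
  show "f 0 = 0" by (rule zero)
  show "f (s1 c x) = s2 c (f x)" by (rule scale)
qed

locale kn =
  fixes sA :: "'k::field \<Rightarrow> 'a::ab_group_add \<Rightarrow> 'a"
    and sB :: "'k \<Rightarrow> 'b::ab_group_add \<Rightarrow> 'b"
    and HA :: "'d::grading \<Rightarrow> 'a set" and HB :: "'d \<Rightarrow> 'b set"
    and brA :: "'a \<Rightarrow> 'a \<Rightarrow> 'a" and brB :: "'b \<Rightarrow> 'b \<Rightarrow> 'b"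
    and \<alpha> :: "'a \<Rightarrow> 'b \<Rightarrow> 'b" and \<beta> :: "'b \<Rightarrow> 'a \<Rightarrow> 'a"
  assumes LA: "graded_lie_algebra sA HA brA"
    and LB: "graded_lie_algebra sB HB brB"
    and K: "knitted_pair sA HA brA sB HB brB \<alpha> \<beta>"
begin

sublocale A: gsp sA HA using LA unfolding graded_lie_algebra_def by (simp add: gsp.intro)
sublocale B: gsp sB HB using LB unfolding graded_lie_algebra_def by (simp add: gsp.intro)

lemmas LAc = LA[unfolded graded_lie_algebra_def]
lemmas LBc = LB[unfolded graded_lie_algebra_def]
lemmas Kc = K[unfolded knitted_pair_def]

lemma linA1: "Vector_Spaces.linear sA sA (\<lambda>x. brA x y)" and linA2: "Vector_Spaces.linear sA sA (brA x)"
  using LAc[THEN conjunct2, THEN conjunct1] unfolding bilinear_map_def by auto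
lemma linB1: "Vector_Spaces.linear sB sB (\<lambda>x. brB x y)" and linB2: "Vector_Spaces.linear sB sB (brB x)"
  using LBc[THEN conjunct2, THEN conjunct1] unfolding bilinear_map_def by auto
lemma repa: "graded_rep sA HA brA sB HB \<alpha>" and repb: "graded_rep sB HB brB sA HA \<beta>"
  using Kc by auto
lemmas repac = repa[unfolded graded_rep_def]
lemmas repbc = repb[unfolded graded_rep_def]
lemma lina1: "Vector_Spaces.linear sA sB (\<lambda>a. \<alpha> a v)" and lina2: "Vector_Spaces.linear sB sB (\<alpha> a)"
  using repac by auto
lemma linb1: "Vector_Spaces.linear sB sA (\<lambda>a. \<beta> a v)" and linb2: "Vector_Spaces.linear sA sA (\<beta> a)"
  using repbc by auto

lemmas lin = lin_facts[OF linA1, simplified] lin_facts[OF linA2] lin_facts[OF linB1, simplified] lin_facts[OF linB2]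
  lin_facts[OF lina1, simplified] lin_facts[OF lina2] lin_facts[OF linb1, simplified] lin_facts[OF linb2]

lemma degA: "x \<in> HA i \<Longrightarrow> y \<in> HA j \<Longrightarrow> brA x y \<in> HA (i + j)"
  by (rule LAc[THEN conjunct2, THEN conjunct2, THEN conjunct1, rule_format])
lemma degB: "x \<in> HB i \<Longrightarrow> y \<in> HB j \<Longrightarrow> brB x y \<in> HB (i + j)"
  by (rule LBc[THEN conjunct2, THEN conjunct2, THEN conjunct1, rule_format])
lemma antA: "x \<in> HA i \<Longrightarrow> y \<in> HA j \<Longrightarrow> brA x y = - sA (ksign i j) (brA y x)"
  by (rule LAc[THEN conjunct2, THEN conjunct2, THEN conjunct2, THEN conjunct1, rule_format])
lemma antB: "x \<in> HB i \<Longrightarrow> y \<in> HB j \<Longrightarrow> brB x y = - sB (ksign i j) (brB y x)"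
  by (rule LBc[THEN conjunct2, THEN conjunct2, THEN conjunct2, THEN conjunct1, rule_format])
lemma jacA: "x \<in> HA i \<Longrightarrow> y \<in> HA j \<Longrightarrow> z \<in> HA l \<Longrightarrow>
   sA (ksign i l) (brA x (brA y z)) + sA (ksign j i) (brA y (brA z x)) + sA (ksign l j) (brA z (brA x y)) = 0"
  by (rule LAc[THEN conjunct2, THEN conjunct2, THEN conjunct2, THEN conjunct2, rule_format])
lemma jacB: "x \<in> HB i \<Longrightarrow> y \<in> HB j \<Longrightarrow> z \<in> HB l \<Longrightarrow>
   sB (ksign i l) (brB x (brB y z)) + sB (ksign j i) (brB y (brB z x)) + sB (ksign l j) (brB z (brB x y)) = 0"
  by (rule LBc[THEN conjunct2, THEN conjunct2, THEN conjunct2, THEN conjunct2, rule_format])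
lemma dega: "a \<in> HA i \<Longrightarrow> b \<in> HB j \<Longrightarrow> \<alpha> a b \<in> HB (j + i)"
  using repac[THEN conjunct2, THEN conjunct2, THEN conjunct1] unfolding graded_map_deg_def by blast
lemma degb: "b \<in> HB i \<Longrightarrow> a \<in> HA j \<Longrightarrow> \<beta> b a \<in> HA (j + i)"
  using repbc[THEN conjunct2, THEN conjunct2, THEN conjunct1] unfolding graded_map_deg_def by blast
lemma homa: "a1 \<in> HA i \<Longrightarrow> a2 \<in> HA j \<Longrightarrow> \<alpha> (brA a1 a2) v = \<alpha> a1 (\<alpha> a2 v) - sB (ksign i j) (\<alpha> a2 (\<alpha> a1 v))"
  by (rule repac[THEN conjunct2, THEN conjunct2, THEN conjunct2, rule_format])
lemma homb: "b1 \<in> HB i \<Longrightarrow> b2 \<in> HB j \<Longrightarrow> \<beta> (brB b1 b2) v = \<beta> b1 (\<beta> b2 v) - sA (ksign i j) (\<beta> b2 (\<beta> b1 v))"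
  by (rule repbc[THEN conjunct2, THEN conjunct2, THEN conjunct2, rule_format])
lemma knA: "a \<in> HA i \<Longrightarrow> b1 \<in> HB j \<Longrightarrow> b2 \<in> HB l \<Longrightarrow>
        \<alpha> a (brB b1 b2) =
          brB (\<alpha> a b1) b2 + sB (ksign i j) (brB b1 (\<alpha> a b2))
          - (sB (ksign i j) (\<alpha> (\<beta> b1 a) b2) - sB (ksign (i + j) l) (\<alpha> (\<beta> b2 a) b1))"
  by (rule Kc[THEN conjunct2, THEN conjunct2, THEN conjunct1, rule_format])
lemma knB: "b \<in> HB i \<Longrightarrow> a1 \<in> HA j \<Longrightarrow> a2 \<in> HA l \<Longrightarrow>
        \<beta> b (brA a1 a2) =
          brA (\<beta> b a1) a2 + sA (ksign i j) (brA a1 (\<beta> b a2))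
          - (sA (ksign i j) (\<beta> (\<alpha> a1 b) a2) - sA (ksign (i + j) l) (\<beta> (\<alpha> a2 b) a1))"
  by (rule Kc[THEN conjunct2, THEN conjunct2, THEN conjunct2, rule_format])

definition twb :: "'b \<Rightarrow> 'a \<Rightarrow> 'a" where
  "twb b a = \<beta> b a - \<beta> (B.od b) (A.od a) - \<beta> (B.od b) (A.od a)"
definition twa :: "'a \<Rightarrow> 'b \<Rightarrow> 'b" where
  "twa a b = \<alpha> a b - \<alpha> (A.od a) (B.od b) - \<alpha> (A.od a) (B.od b)"
definition BR :: "'a \<times> 'b \<Rightarrow> 'a \<times> 'b \<Rightarrow> 'a \<times> 'b" where
  "BR p q = (brA (fst p) (fst q) + \<beta> (snd p) (fst q) - twb (snd q) (fst p),
             brB (snd p) (snd q) + \<alpha> (fst p) (snd q) - twa (fst q) (snd p))"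

lemma ksign_cases: "ksign i j = (if gpar i \<and> gpar j then -1 else 1)" by (simp add: ksign_def)

lemma twb_hom: "a \<in> HA i \<Longrightarrow> b \<in> HB j \<Longrightarrow> twb b a = sA (ksign j i) (\<beta> b a)"
  by (cases "gpar i"; cases "gpar j") (auto simp: twb_def A.od_hom B.od_hom ksign_def lin)
lemma twa_hom: "a \<in> HA i \<Longrightarrow> b \<in> HB j \<Longrightarrow> twa a b = sB (ksign i j) (\<alpha> a b)"
  by (cases "gpar i"; cases "gpar j") (auto simp: twa_def A.od_hom B.od_hom ksign_def lin)

lemma BR_hom: "a1 \<in> HA i \<Longrightarrow> b1 \<in> HB i \<Longrightarrow> a2 \<in> HA j \<Longrightarrow> b2 \<in> HB j \<Longrightarrow>
  BR (a1, b1) (a2, b2) = (brA a1 a2 + \<beta> b1 a2 - sA (ksign j i) (\<beta> b2 a1),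
          brB b1 b2 + \<alpha> a1 b2 - sB (ksign j i) (\<alpha> a2 b1))"
  by (simp add: BR_def twb_hom twa_hom)

lemma BR_deg: assumes "a1 \<in> HA i" "b1 \<in> HB i" "a2 \<in> HA j" "b2 \<in> HB j"
  shows "fst (BR (a1, b1) (a2, b2)) \<in> HA (i + j)" "snd (BR (a1, b1) (a2, b2)) \<in> HB (i + j)"
proof -
  have c: "j + i = i + j" by (simp add: add.commute)
  have 1: "\<beta> b1 a2 \<in> HA (i + j)" using degb[OF assms(2,3)] c by simp
  have 2: "\<beta> b2 a1 \<in> HA (i + j)" using degb[OF assms(4,1)] by simp
  have 3: "\<alpha> a1 b2 \<in> HB (i + j)" using dega[OF assms(1,4)] c by simp
  have 4: "\<alpha> a2 b1 \<in> HB (i + j)" using dega[OF assms(3,2)] by simp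
  show "fst (BR (a1, b1) (a2, b2)) \<in> HA (i + j)"
    using assms 1 2 by (simp add: BR_hom A.Hadd A.Hdiff A.Hscale degA)
  show "snd (BR (a1, b1) (a2, b2)) \<in> HB (i + j)"
    using assms 3 4 by (simp add: BR_hom B.Hadd B.Hdiff B.Hscale degB)
qed

lemma BR_add2: "BR x (y + z) = BR x y + BR x z"
  by (simp add: BR_def twa_def twb_def lin)
lemma BR_add1: "BR (y + z) x = BR y x + BR z x"
  by (simp add: BR_def twa_def twb_def lin)
lemma BR_sc2: "BR x (prod_scale sA sB c y) = prod_scale sA sB c (BR x y)"
  by (simp add: BR_def twa_def twb_def lin prod_scale_def)
lemma BR_sc1: "BR (prod_scale sA sB c y) x = prod_scale sA sB c (BR y x)"
  by (simp add: BR_def twa_def twb_def lin prod_scale_def)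

lemma BR_bil: "bilinear_map (prod_scale sA sB) (prod_scale sA sB) (prod_scale sA sB) BR"
  unfolding bilinear_map_def Vector_Spaces.linear_iff
  using prod_vs[OF A.vs B.vs] BR_add1 BR_add2 BR_sc1 BR_sc2 by blast

lemma BR_anti: assumes "a1 \<in> HA i" "b1 \<in> HB i" "a2 \<in> HA j" "b2 \<in> HB j"
  shows "BR (a1, b1) (a2, b2) = - prod_scale sA sB (ksign i j) (BR (a2, b2) (a1, b1))"
  using antA[OF assms(1,3)] antB[OF assms(2,4)]
  by (cases "gpar i"; cases "gpar j") (simp_all add: BR_hom[OF assms] BR_hom[OF assms(3,4,1,2)] prod_scale_def ksign_def)

end


context kn begin

lemma jac_fst:
  assumes h1: "a1 \<in> HA i" "b1 \<in> HB i" and h2: "a2 \<in> HA j" "b2 \<in> HB j" and h3: "a3 \<in> HA l" "b3 \<in> HB l"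
  shows "sA (ksign i l) (fst (BR (a1,b1) (BR (a2,b2) (a3,b3)))) + sA (ksign j i) (fst (BR (a2,b2) (BR (a3,b3) (a1,b1))))
     + sA (ksign l j) (fst (BR (a3,b3) (BR (a1,b1) (a2,b2)))) = 0"
proof -
  have e1: "BR (a1,b1) (BR (a2,b2) (a3,b3)) = BR (a1,b1) (fst (BR (a2,b2) (a3,b3)), snd (BR (a2,b2) (a3,b3)))" by simp
  have e2: "BR (a2,b2) (BR (a3,b3) (a1,b1)) = BR (a2,b2) (fst (BR (a3,b3) (a1,b1)), snd (BR (a3,b3) (a1,b1)))" by simp
  have e3: "BR (a3,b3) (BR (a1,b1) (a2,b2)) = BR (a3,b3) (fst (BR (a1,b1) (a2,b2)), snd (BR (a1,b1) (a2,b2)))" by simp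
  note r1 = BR_hom[OF h1 BR_deg[OF h2 h3]] and r2 = BR_hom[OF h2 BR_deg[OF h3 h1]] and r3 = BR_hom[OF h3 BR_deg[OF h1 h2]]
  note i1 = BR_hom[OF h2 h3] and i2 = BR_hom[OF h3 h1] and i3 = BR_hom[OF h1 h2]
  note J = jacA[OF h1(1) h2(1) h3(1)]
  note H1 = homb[OF h2(2) h3(2), of a1] and H2 = homb[OF h3(2) h1(2), of a2] and H3 = homb[OF h1(2) h2(2), of a3]
  note K1 = knB[OF h1(2) h2(1) h3(1)] and K2 = knB[OF h2(2) h3(1) h1(1)] and K3 = knB[OF h3(2) h1(1) h2(1)]
  note N1 = antA[OF degb[OF h1(2) h2(1)] h3(1)] and N2 = antA[OF degb[OF h2(2) h3(1)] h1(1)] and N3 = antA[OF degb[OF h3(2) h1(1)] h2(1)]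
  show ?thesis
    unfolding e1 e2 e3 r1 r2 r3 unfolding i1 i2 i3
    using J H1 H2 H3 K1 K2 K3 N1 N2 N3
    apply (cases "gpar i"; cases "gpar j"; cases "gpar l")
    apply (simp_all add: ksign_def gpar_add lin)
    done
qed

lemma jac_snd:
  assumes h1: "a1 \<in> HA i" "b1 \<in> HB i" and h2: "a2 \<in> HA j" "b2 \<in> HB j" and h3: "a3 \<in> HA l" "b3 \<in> HB l"
  shows "sB (ksign i l) (snd (BR (a1,b1) (BR (a2,b2) (a3,b3)))) + sB (ksign j i) (snd (BR (a2,b2) (BR (a3,b3) (a1,b1))))
     + sB (ksign l j) (snd (BR (a3,b3) (BR (a1,b1) (a2,b2)))) = 0"
proof -
  have e1: "BR (a1,b1) (BR (a2,b2) (a3,b3)) = BR (a1,b1) (fst (BR (a2,b2) (a3,b3)), snd (BR (a2,b2) (a3,b3)))" by simp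
  have e2: "BR (a2,b2) (BR (a3,b3) (a1,b1)) = BR (a2,b2) (fst (BR (a3,b3) (a1,b1)), snd (BR (a3,b3) (a1,b1)))" by simp
  have e3: "BR (a3,b3) (BR (a1,b1) (a2,b2)) = BR (a3,b3) (fst (BR (a1,b1) (a2,b2)), snd (BR (a1,b1) (a2,b2)))" by simp
  note r1 = BR_hom[OF h1 BR_deg[OF h2 h3]] and r2 = BR_hom[OF h2 BR_deg[OF h3 h1]] and r3 = BR_hom[OF h3 BR_deg[OF h1 h2]]
  note i1 = BR_hom[OF h2 h3] and i2 = BR_hom[OF h3 h1] and i3 = BR_hom[OF h1 h2]
  note J = jacB[OF h1(2) h2(2) h3(2)]
  note H1 = homa[OF h2(1) h3(1), of b1] and H2 = homa[OF h3(1) h1(1), of b2] and H3 = homa[OF h1(1) h2(1), of b3]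
  note K1 = knA[OF h1(1) h2(2) h3(2)] and K2 = knA[OF h2(1) h3(2) h1(2)] and K3 = knA[OF h3(1) h1(2) h2(2)]
  note N1 = antB[OF dega[OF h1(1) h2(2)] h3(2)] and N2 = antB[OF dega[OF h2(1) h3(2)] h1(2)] and N3 = antB[OF dega[OF h3(1) h1(2)] h2(2)]
  show ?thesis
    unfolding e1 e2 e3 r1 r2 r3 unfolding i1 i2 i3
    using J H1 H2 H3 K1 K2 K3 N1 N2 N3
    apply (cases "gpar i"; cases "gpar j"; cases "gpar l")
    apply (simp_all add: ksign_def gpar_add lin)
    done
qed

lemma BR_lie: "graded_lie_algebra (prod_scale sA sB) (prod_grading HA HB) BR"
  unfolding graded_lie_algebra_def
proof (intro conjI allI impI)
  show "graded_space (prod_scale sA sB) (prod_grading HA HB)"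
    by (rule prod_gs) (use LA LB in \<open>auto simp: graded_lie_algebra_def\<close>)
  show "bilinear_map (prod_scale sA sB) (prod_scale sA sB) (prod_scale sA sB) BR" by (rule BR_bil)
next
  fix i j x y assume x: "x \<in> prod_grading HA HB i" and y: "y \<in> prod_grading HA HB j"
  obtain a1 b1 where "x = (a1, b1)" by (cases x)
  moreover obtain a2 b2 where "y = (a2, b2)" by (cases y)
  ultimately show "BR x y \<in> prod_grading HA HB (i + j)"
    using x y BR_deg[of a1 i b1 a2 j b2] by (auto simp: prod_grading_def mem_Times_iff)
next
  fix i j x y assume x: "x \<in> prod_grading HA HB i" and y: "y \<in> prod_grading HA HB j"
  obtain a1 b1 where "x = (a1, b1)" by (cases x)
  moreover obtain a2 b2 where "y = (a2, b2)" by (cases y)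
  ultimately show "BR x y = - prod_scale sA sB (ksign i j) (BR y x)"
    using x y BR_anti[of a1 i b1 a2 j b2] by (auto simp: prod_grading_def)
next
  fix i j l x y z assume x: "x \<in> prod_grading HA HB i" and y: "y \<in> prod_grading HA HB j"
    and z: "z \<in> prod_grading HA HB l"
  obtain a1 b1 where 1: "x = (a1, b1)" by (cases x)
  obtain a2 b2 where 2: "y = (a2, b2)" by (cases y)
  obtain a3 b3 where 3: "z = (a3, b3)" by (cases z)
  have h: "a1 \<in> HA i" "b1 \<in> HB i" "a2 \<in> HA j" "b2 \<in> HB j" "a3 \<in> HA l" "b3 \<in> HB l"
    using x y z 1 2 3 by (auto simp: prod_grading_def)
  show "prod_scale sA sB (ksign i l) (BR x (BR y z)) + prod_scale sA sB (ksign j i) (BR y (BR z x))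
          + prod_scale sA sB (ksign l j) (BR z (BR x y)) = 0"
    using jac_fst[OF h] jac_snd[OF h] unfolding 1 2 3 prod_scale_def by (simp add: zero_prod_def)
qed

end

theorem theorem1p2:
  fixes sA :: "'k::field \<Rightarrow> 'a::ab_group_add \<Rightarrow> 'a"
    and sB :: "'k \<Rightarrow> 'b::ab_group_add \<Rightarrow> 'b"
    and HA :: "'d::grading \<Rightarrow> 'a set" and HB :: "'d \<Rightarrow> 'b set"
    and brA :: "'a \<Rightarrow> 'a \<Rightarrow> 'a" and brB :: "'b \<Rightarrow> 'b \<Rightarrow> 'b"
    and \<alpha> :: "'a \<Rightarrow> 'b \<Rightarrow> 'b" and \<beta> :: "'b \<Rightarrow> 'a \<Rightarrow> 'a"
  assumes "graded_lie_algebra sA HA brA"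
    and "graded_lie_algebra sB HB brB"
    and "knitted_pair sA HA brA sB HB brB \<alpha> \<beta>"
  shows "\<exists>br. graded_lie_algebra (prod_scale sA sB) (prod_grading HA HB) br \<and>
    (\<forall>i j a1 b1 a2 b2. a1 \<in> HA i \<longrightarrow> b1 \<in> HB i \<longrightarrow> a2 \<in> HA j \<longrightarrow> b2 \<in> HB j \<longrightarrow>
       br (a1, b1) (a2, b2) =
         (brA a1 a2 + \<beta> b1 a2 - sA (ksign j i) (\<beta> b2 a1),
          brB b1 b2 + \<alpha> a1 b2 - sB (ksign j i) (\<alpha> a2 b1)))"
proof -
  interpret kn sA sB HA HB brA brB \<alpha> \<beta> by (rule kn.intro) fact+
  show ?thesis using BR_lie BR_hom by blast
qed


end
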